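(* Let $m,n$ be integers with $1<m<n-1$. Then there exist infinitely many $x\in\mathrm{Gr}(m,n)(\mathbb{Q})$ with $\ell(x)=0$.
   Context: For integers $1\le m\le n-1$, rational points $x\in\mathrm{Gr}(m,n)(\mathbb{Q})$ (the $m$-dimensional linear subspaces $W\subset\mathbb{Q}^n$) are identified with primitive lattices $\Lambda=W\cap\mathbb{Z}^n$ of rank $m$; a sublattice $\Lambda\subset\mathbb{Z}^n$ is primitive if $\Lambda_{\mathbb{R}}\cap\mathbb{Z}^n=\Lambda$, where $\Lambda_{\mathbb{R}}$ denotes the real span of $\Lambda$. All lattices live in Euclidean spaces, and $\mathrm{covol}(L)=\sqrt{\det(\langle b_i,b_j\rangle)_{i,j}}$ for any basis $(b_i)$ of $L$. The anticanonical height is $H(x)=\mathrm{covol}(\Lambda)^n$ and $h(x)=\log H(x)$. The dual lattice is $\Lambda^*=\{y\in\Lambda_{\mathbb{R}}:\langle y,z\rangle\in\mathbb{Z}\ \forall z\in\Lambda\}$; the factor lattice $\Lambda^\pi$ is the image of $\mathbb{Z}^n$ under the orthogonal projection $\mathbb{R}^n\to\Lambda_{\mathbb{R}}^\perp$. The tangent lattice is $T_\Lambda=\Lambda^*\otimes_{\mathbb{Z}}\Lambda^\pi$, a lattice of rank $m(n-m)$ in $\mathbb{R}^n\otimes\mathbb{R}^n$ with inner product $\langle a\otimes b,c\otimes d\rangle=\langle a,c\rangle\langle b,d\rangle$. For a lattice $L$ of rank $r$, its slope is $\mu(L)=-\frac1r\log\mathrm{covol}(L)$; the maximal slope $\mu_{\max}(L)$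 is the maximum of $\mu(M)$ over nonzero sublattices $M\subseteq L$; the minimal slope $\mu_{\min}(L)$ is the minimum of $\mu(L/M)$ over primitive sublattices $M\subsetneq L$, where $L/M$ is identified with the orthogonal projection of $L$ onto $M_{\mathbb{R}}^\perp\cap L_{\mathbb{R}}$. The freeness of $x$ (with $H(x)>1$) is $\ell(x)=\max\{m(n-m)\mu_{\min}(T_\Lambda),0\}/h(x)\in[0,1]$. *)

theory Defs
  imports "HOL-Analysis.Analysis"
begin

definition int_span :: "'a::real_vector set \<Rightarrow> 'a set" where
  "int_span S = {x. \<exists>F c. finite F \<and> F \<subseteq> S \<and> x = (\<Sum>v\<in>F. of_int (c v) *\<^sub>R v)}"

definition lattice_basis :: "'a::euclidean_space set \<Rightarrow> 'a list \<Rightarrow> bool" where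
  "lattice_basis L bs \<longleftrightarrow> distinct bs \<and> independent (set bs) \<and> L = int_span (set bs)"

definition gram_det :: "'a::euclidean_space list \<Rightarrow> real" where
  "gram_det bs = (\<Sum>p\<in>{p. p permutes {..<length bs}}.
      of_int (sign p) * (\<Prod>i<length bs. (bs ! i) \<bullet> (bs ! (p i))))"

definition covol :: "'a::euclidean_space set \<Rightarrow> real" where
  "covol L = sqrt (gram_det (SOME bs. lattice_basis L bs))"

definition lattice_rank :: "'a::euclidean_space set \<Rightarrow> nat" where
  "lattice_rank L = dim (span L)"

definition slope :: "'a::euclidean_space set \<Rightarrow> real" where
  "slope L = - (1 / real (lattice_rank L)) * ln (covol L)"

definition perp_proj :: "'a::euclidean_space set \<Rightarrow> 'a \<Rightarrow> 'a" where
  "perp_proj V x = (THE y. x - y \<in> V \<and> (\<forall>v\<in>V. v \<bullet> y = 0))"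

definition primitive_sublattice :: "'a::euclidean_space set \<Rightarrow> 'a set \<Rightarrow> bool" where
  "primitive_sublattice M L \<longleftrightarrow> M \<subseteq> L \<and> span M \<inter> L = M"

text \<open>L/M: orthogonal projection of L onto (span M)^perp (inside span L).\<close>
definition lattice_quot :: "'a::euclidean_space set \<Rightarrow> 'a set \<Rightarrow> 'a set" where
  "lattice_quot L M = perp_proj (span M) ` L"

text \<open>Minimal slope (the minimum is attained; we write it as an infimum).\<close>
definition min_slope :: "'a::euclidean_space set \<Rightarrow> real" where
  "min_slope L = Inf {slope (lattice_quot L M) | M. primitive_sublattice M L \<and> M \<noteq> L}"

definition dual_lattice :: "'a::euclidean_space set \<Rightarrow> 'a set" where
  "dual_lattice L = {y \<in> span L. \<forall>z\<in>L. y \<bullet> z \<in> \<int>}"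

definition int_points :: "(real^'n) set" where
  "int_points = {x. \<forall>i. x $ i \<in> \<int>}"

text \<open>Rational points of Gr(m,n), n = CARD('n), identified with primitive lattices of rank m.\<close>
definition grass_points :: "nat \<Rightarrow> (real^'n) set set" where
  "grass_points m = {\<Lambda>. \<Lambda> \<subseteq> int_points \<and> \<Lambda> = span \<Lambda> \<inter> int_points \<and> dim (span \<Lambda>) = m}"

definition factor_lattice :: "(real^'n) set \<Rightarrow> (real^'n) set" where
  "factor_lattice \<Lambda> = perp_proj (span \<Lambda>) ` int_points"

text \<open>R^n tensor R^n realised as real^('n \<times> 'n), with (a \<otimes> b)(i,j) = a_i b_j;
  its standard inner product satisfies <a\<otimes>b, c\<otimes>d> = <a,c><b,d>.\<close>
definition tensor_vec :: "real^'n \<Rightarrow> real^'n \<Rightarrow> real^('n \<times> 'n)" where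
  "tensor_vec a b = (\<chi> p. a $ fst p * b $ snd p)"

definition tangent_lattice :: "(real^'n) set \<Rightarrow> (real^('n \<times> 'n)) set" where
  "tangent_lattice \<Lambda> =
     int_span {tensor_vec a b | a b. a \<in> dual_lattice \<Lambda> \<and> b \<in> factor_lattice \<Lambda>}"

definition height :: "(real^'n) set \<Rightarrow> real" where
  "height \<Lambda> = covol \<Lambda> ^ CARD('n)"

definition log_height :: "(real^'n) set \<Rightarrow> real" where
  "log_height \<Lambda> = ln (height \<Lambda>)"

text \<open>Freeness ell(x) (meaningful when H(x) > 1).\<close>
definition freeness :: "(real^'n) set \<Rightarrow> real" where
  "freeness \<Lambda> =
     (let m = dim (span \<Lambda>) in
      max (real (m * (CARD('n) - m)) * min_slope (tangent_lattice \<Lambda>)) 0 / log_height \<Lambda>)"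

end

theory Submission
  imports Defs "Jordan_Normal_Form.Determinant"
begin

interpretation Z: Modules.module "\<lambda>(k::int) (x::'a::real_vector). of_int k *\<^sub>R x"
  by standard (auto simp: scaleR_add_right scaleR_add_left)

lemma int_span_Z: "int_span S = Z.span S"
  unfolding int_span_def Z.span_explicit by auto

context Modules.module begin
lemma span_list: "span (set xs) = {\<Sum>j<length xs. c j *s xs!j | c. True}"
proof (induction xs)
  case Nil
  then show ?case by auto
next
  case (Cons x xs)
  have "span (set (x#xs)) = {y. \<exists>k. y - k *s x \<in> span (set xs)}"
    by (simp add: span_insert)
  also have "\<dots> = {\<Sum>j<length (x#xs). c j *s (x#xs)!j | c. True}"
  proof safe
    fix y k assume "y - k *s x \<in> span (set xs)"
    then obtain c where c: "y - k *s x = (\<Sum>j<length xs. c j *s xs!j)" using Cons by auto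
    show "\<exists>c'. y = (\<Sum>j<length (x#xs). c' j *s (x#xs)!j) \<and> True"
      by (rule exI[of _ "\<lambda>j. case j of 0 \<Rightarrow> k | Suc j \<Rightarrow> c j"])
         (simp only: length_Cons sum.lessThan_Suc_shift, simp add: c[symmetric])
  next
    fix c
    show "\<exists>k. (\<Sum>j<length (x#xs). c j *s (x#xs)!j) - k *s x \<in> span (set xs)"
      using Cons by (intro exI[of _ "c 0"]) (simp only: length_Cons sum.lessThan_Suc_shift, auto)
  qed
  finally show ?case .
qed
end

lemma int_span_list: "int_span (set xs) = {\<Sum>j<length xs. of_int (c j) *\<^sub>R xs!j | c. True}"
  unfolding int_span_Z Z.span_list by simp

lemma real_span_list: "span (set xs) = {\<Sum>j<length xs. c j *\<^sub>R xs!j | c. True}"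
  by (rule real_vector.span_list)

lemma Z_span_subset_span: "Z.span S \<subseteq> span S"
  by (rule Z.span_minimal) (auto simp: Z.subspace_def span_base span_add span_scale span_zero)

definition gmat :: "'a::euclidean_space list \<Rightarrow> real mat" where
  "gmat bs = mat (length bs) (length bs) (\<lambda>(i,j). bs!i \<bullet> bs!j)"

lemma gmat_carrier[simp]: "gmat bs \<in> carrier_mat (length bs) (length bs)"
  unfolding gmat_def by simp

lemma gram_det_gmat: "gram_det bs = Determinant.det (gmat bs)"
proof -
  have "Determinant.det (gmat bs) = (\<Sum>p\<in>{p. p permutes {0..<length bs}}.
     signof p * (\<Prod>i = 0..<length bs. gmat bs $$ (i, p i)))"
    by (rule det_def'[OF gmat_carrier])
  also have "\<dots> = gram_det bs"
    unfolding gram_det_def lessThan_atLeast0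
  proof (rule sum.cong[OF refl], rule arg_cong[where f="\<lambda>x. _ * x"], rule prod.cong[OF refl])
    fix p i assume p: "p \<in> {p. p permutes {0..<length bs}}" and i: "i \<in> {0..<length bs}"
    have "p i < length bs" using permutes_in_image[of p "{0..<length bs}" i] p i by auto
    then show "gmat bs $$ (i, p i) = bs ! i \<bullet> bs ! p i" using i by (simp add: gmat_def)
  qed
  finally show ?thesis ..
qed

definition lcomb :: "real mat \<Rightarrow> 'a::real_vector list \<Rightarrow> 'a list" where
  "lcomb A bs = map (\<lambda>i. \<Sum>j<length bs. A $$ (i,j) *\<^sub>R bs!j) [0..<dim_row A]"

lemma length_lcomb[simp]: "length (lcomb A bs) = dim_row A"
  by (simp add: lcomb_def)

lemma nth_lcomb: "i < dim_row A \<Longrightarrow> lcomb A bs ! i = (\<Sum>j<length bs. A $$ (i,j) *\<^sub>R bs!j)"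
  by (simp add: lcomb_def)

lemma gmat_lcomb:
  fixes bs :: "'a::euclidean_space list"
  assumes A: "A \<in> carrier_mat r (length bs)"
  shows "gmat (lcomb A bs) = A * gmat bs * transpose_mat A"
proof (rule eq_matI)
  show "dim_row (gmat (lcomb A bs)) = dim_row (A * gmat bs * transpose_mat A)"
    using A by (simp add: gmat_def)
  show "dim_col (gmat (lcomb A bs)) = dim_col (A * gmat bs * transpose_mat A)"
    using A by (simp add: gmat_def)
  fix i j assume i: "i < dim_row (A * gmat bs * transpose_mat A)" and j: "j < dim_col (A * gmat bs * transpose_mat A)"
  have ir: "i < r" "j < r" using i j A by auto
  have "gmat (lcomb A bs) $$ (i,j) = (\<Sum>l<length bs. A $$ (i,l) *\<^sub>R bs!l) \<bullet> (\<Sum>k<length bs. A $$ (j,k) *\<^sub>R bs!k)"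
    using ir A by (simp add: gmat_def nth_lcomb)
  also have "\<dots> = (\<Sum>l<length bs. \<Sum>k<length bs. A $$ (i,l) * A $$ (j,k) * (bs!l \<bullet> bs!k))"
    by (simp add: inner_sum_left inner_sum_right sum_distrib_left mult.assoc, subst sum.swap, simp add: ac_simps)
  also have "\<dots> = (\<Sum>k<length bs. \<Sum>l<length bs. A $$ (i,l) * (bs!l \<bullet> bs!k) * A $$ (j,k))"
    by (rule trans[OF sum.swap]) (auto intro!: sum.cong simp: ac_simps)
  also have "\<dots> = (A * gmat bs * transpose_mat A) $$ (i,j)"
    using ir A by (simp add: index_mult_mat scalar_prod_def gmat_def sum_distrib_right lessThan_atLeast0)
  finally show "gmat (lcomb A bs) $$ (i,j) = (A * gmat bs * transpose_mat A) $$ (i,j)" .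
qed

lemma gram_lcomb:
  fixes bs :: "'a::euclidean_space list"
  assumes A: "A \<in> carrier_mat r r" and l: "length bs = r"
  shows "gram_det (lcomb A bs) = Determinant.det A ^ 2 * gram_det bs"
proof -
  have AG: "A * gmat bs \<in> carrier_mat r r" using A l by auto
  have "gram_det (lcomb A bs) = Determinant.det (A * gmat bs * transpose_mat A)"
    using gmat_lcomb[of A r bs] A l by (simp add: gram_det_gmat)
  also have "\<dots> = Determinant.det (A * gmat bs) * Determinant.det (transpose_mat A)"
    by (rule det_mult[OF AG]) (use A in auto)
  also have "\<dots> = Determinant.det A * Determinant.det (gmat bs) * Determinant.det A"
    using det_mult[OF A, of "gmat bs"] l det_transpose[OF A] gmat_carrier[of bs] by simp
  finally show ?thesis by (simp add: gram_det_gmat power2_eq_square)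
qed

lemma gram_nil[simp]: "gram_det [] = 1"
  by (simp add: gram_det_def)

lemma gram_snoc_orth:
  fixes s :: "'a::euclidean_space list"
  assumes orth: "\<forall>v\<in>set s. v \<bullet> z = 0"
  shows "gram_det (s @ [z]) = gram_det s * (z \<bullet> z)"
proof -
  let ?n = "length s"
  have eq: "gmat (s @ [z]) = four_block_mat (gmat s) (0\<^sub>m ?n 1) (0\<^sub>m 1 ?n) (mat 1 1 (\<lambda>_. z \<bullet> z))"
  proof (rule eq_matI)
    fix i j assume i: "i < dim_row (four_block_mat (gmat s) (0\<^sub>m ?n 1) (0\<^sub>m 1 ?n) (mat 1 1 (\<lambda>_. z \<bullet> z)))"
      and j: "j < dim_col (four_block_mat (gmat s) (0\<^sub>m ?n 1) (0\<^sub>m 1 ?n) (mat 1 1 (\<lambda>_. z \<bullet> z)))"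
    then have i': "i < Suc ?n" and j': "j < Suc ?n" by (auto simp: gmat_def)
    show "gmat (s @ [z]) $$ (i, j) = four_block_mat (gmat s) (0\<^sub>m ?n 1) (0\<^sub>m 1 ?n) (mat 1 1 (\<lambda>_. z \<bullet> z)) $$ (i, j)"
      using i' j' orth
      by (auto simp: gmat_def nth_append less_Suc_eq inner_commute)
  qed (auto simp: gmat_def)
  have "gram_det (s @ [z]) = Determinant.det (gmat s) * Determinant.det (mat 1 1 (\<lambda>_. z \<bullet> z))"
    unfolding gram_det_gmat eq
    by (rule det_four_block_mat_upper_right_zero_col) auto
  also have "\<dots> = gram_det s * (z \<bullet> z)"
    by (simp add: gram_det_gmat det_single)
  finally show ?thesis .
qed

lemma gram_orth_list:
  fixes s :: "'a::euclidean_space list"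
  assumes "distinct s" "\<forall>u\<in>set s. \<forall>v\<in>set s. u \<noteq> v \<longrightarrow> u \<bullet> v = 0"
  shows "gram_det s = (\<Prod>x\<leftarrow>s. x \<bullet> x)"
  using assms
proof (induction s rule: rev_induct)
  case Nil then show ?case by simp
next
  case (snoc x s)
  have "\<forall>v\<in>set s. v \<bullet> x = 0" using snoc.prems by auto
  then show ?case using snoc by (simp add: gram_snoc_orth)
qed

lemma hadamard:
  fixes s :: "'a::euclidean_space list"
  shows "0 \<le> gram_det s \<and> gram_det s \<le> (\<Prod>x\<leftarrow>s. x \<bullet> x) \<and>
    (independent (set s) \<and> distinct s \<longrightarrow> 0 < gram_det s)"
proof (induction s rule: rev_induct)
  case Nil then show ?case by simp
next
  case (snoc x s)
  let ?n = "length s"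
  obtain y z where y: "y \<in> span (set s)" and z: "\<And>w. w \<in> span (set s) \<Longrightarrow> z \<bullet> w = 0"
    and x: "x = y + z"
    using orthogonal_subspace_decomp_exists[of "set s" x] unfolding real_inner_class.orthogonal_def by blast
  obtain c where c: "y = (\<Sum>j<?n. c j *\<^sub>R s!j)" using y unfolding real_span_list by auto
  define A where "A = mat (Suc ?n) (Suc ?n) (\<lambda>(i,j). if i = j then 1 else if i = ?n \<and> j < ?n then c j else (0::real))"
  have Ac: "A \<in> carrier_mat (Suc ?n) (Suc ?n)" by (simp add: A_def)
  have lc: "lcomb A (s @ [z]) = s @ [x]"
  proof (rule nth_equalityI)
    show "length (lcomb A (s @ [z])) = length (s @ [x])" by (simp add: A_def)
    fix i assume "i < length (lcomb A (s @ [z]))"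
    then have i: "i < Suc ?n" by (simp add: A_def)
    show "lcomb A (s @ [z]) ! i = (s @ [x]) ! i"
    proof (cases "i < ?n")
      case True
      have "lcomb A (s @ [z]) ! i = (\<Sum>j<Suc ?n. (if i = j then 1 else 0) *\<^sub>R (s @ [z]) ! j)"
        using i True by (auto simp: nth_lcomb A_def intro!: sum.cong)
      also have "\<dots> = (s @ [z]) ! i" using i
        by (simp add: if_distrib[of "\<lambda>r. r *\<^sub>R _"] cong: if_cong)
      finally show ?thesis using True by (simp add: nth_append)
    next
      case False
      then have ii: "i = ?n" using i by simp
      have "lcomb A (s @ [z]) ! i = (\<Sum>j<Suc ?n. A $$ (?n, j) *\<^sub>R (s @ [z]) ! j)"
        using ii by (simp add: nth_lcomb A_def)
      also have "\<dots> = (\<Sum>j<?n. c j *\<^sub>R s ! j) + z"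
        by (simp add: A_def nth_append)
      finally show ?thesis using ii c x by simp
    qed
  qed
  have detA: "Determinant.det A = 1"
  proof -
    have "Determinant.det A = prod_list (diag_mat A)"
      by (rule det_lower_triangular[OF _ Ac]) (auto simp: A_def)
    also have "diag_mat A = map (\<lambda>i. 1) [0..<Suc ?n]" by (simp add: diag_mat_def A_def)
    also have "prod_list (map (\<lambda>i. 1::real) [0..<Suc ?n]) = 1" by (simp add: map_replicate_const)
    finally show ?thesis .
  qed
  have g1: "gram_det (s @ [x]) = gram_det (s @ [z])"
    using gram_lcomb[OF Ac, of "s @ [z]"] lc detA by simp
  have orth: "\<forall>v\<in>set s. v \<bullet> z = 0"
    using z span_base by (force simp: inner_commute)
  have g2: "gram_det (s @ [x]) = gram_det s * (z \<bullet> z)"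
    using g1 gram_snoc_orth[OF orth] by simp
  have yz: "y \<bullet> z = 0" using z[OF y] by (simp add: inner_commute)
  have zx: "z \<bullet> z \<le> x \<bullet> x"
    using yz by (simp add: x inner_add_left inner_add_right inner_commute)
  have z0: "0 \<le> z \<bullet> z" by simp
  have prodeq: "(\<Prod>v\<leftarrow>s @ [x]. v \<bullet> v) = (\<Prod>v\<leftarrow>s. v \<bullet> v) * (x \<bullet> x)" by simp
  have A1: "0 \<le> gram_det (s @ [x])" using snoc z0 g2 by simp
  have A2: "gram_det (s @ [x]) \<le> (\<Prod>v\<leftarrow>s @ [x]. v \<bullet> v)"
    unfolding g2 prodeq using snoc z0 zx by (intro mult_mono) auto
  have A3: "0 < gram_det (s @ [x])" if ind: "independent (set (s @ [x]))" and dis: "distinct (s @ [x])"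
  proof -
    have xs: "x \<notin> set s" using dis by simp
    have "independent (insert x (set s))" using ind by simp
    then have ind': "independent (set s)" and xsp: "x \<notin> span (set s)"
      using xs by (auto simp: independent_insert)
    have "z \<noteq> 0" using xsp x y by auto
    then have "0 < z \<bullet> z" by simp
    moreover have "0 < gram_det s" using snoc ind' dis by simp
    ultimately show ?thesis using g2 by simp
  qed
  show ?case using A1 A2 A3 by blast
qed

lemma int_lcomb:
  fixes s bs :: "'a::euclidean_space list"
  assumes l: "length s = r" "length bs = r" and sub: "set s \<subseteq> int_span (set bs)"
  shows "\<exists>A. A \<in> carrier_mat r r \<and> s = lcomb A bs \<and> Determinant.det A \<in> \<int>"
proof -
  have "\<forall>i. i < r \<longrightarrow> (\<exists>c. s!i = (\<Sum>j<r. of_int (c j) *\<^sub>R bs!j))"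
  proof (intro allI impI)
    fix i assume "i < r"
    then have "s!i \<in> int_span (set bs)" using sub l nth_mem[of i s] by auto
    then show "\<exists>c. s!i = (\<Sum>j<r. of_int (c j) *\<^sub>R bs!j)" unfolding int_span_list using l(2) by auto
  qed
  then obtain C where C: "\<And>i. i < r \<Longrightarrow> s!i = (\<Sum>j<r. of_int (C i j) *\<^sub>R bs!j)"
    by metis
  define B where "B = mat r r (\<lambda>(i,j). C i j)"
  define A where "A = map_mat real_of_int B"
  have Ac: "A \<in> carrier_mat r r" by (simp add: A_def B_def)
  have "s = lcomb A bs"
  proof (rule nth_equalityI)
    show "length s = length (lcomb A bs)" using l by (simp add: A_def B_def)
    fix i assume "i < length s"
    then have i: "i < r" using l by simp
    have "lcomb A bs ! i = (\<Sum>j<r. A $$ (i,j) *\<^sub>R bs!j)" using i l by (simp add: nth_lcomb A_def B_def)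
    also have "\<dots> = (\<Sum>j<r. of_int (C i j) *\<^sub>R bs!j)"
      by (rule sum.cong[OF refl]) (use i in \<open>simp add: A_def B_def\<close>)
    finally show "s ! i = lcomb A bs ! i" using C[OF i] by simp
  qed
  moreover have "Determinant.det A \<in> \<int>"
    unfolding A_def of_int_hom.hom_det by simp
  ultimately show ?thesis using Ac by blast
qed

lemma gram_sub:
  fixes s bs :: "'a::euclidean_space list"
  assumes l: "length s = length bs" and sub: "set s \<subseteq> int_span (set bs)"
    and ind: "independent (set s)" and dis: "distinct s"
  shows "0 < gram_det bs \<and> gram_det bs \<le> gram_det s"
proof -
  obtain A where A: "A \<in> carrier_mat (length bs) (length bs)" "s = lcomb A bs" "Determinant.det A \<in> \<int>"
    using int_lcomb[OF l refl sub] by blast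
  have g: "gram_det s = Determinant.det A ^ 2 * gram_det bs"
    using gram_lcomb[OF A(1) refl] A(2) by simp
  have pos: "0 < gram_det s" using hadamard[of s] ind dis by simp
  obtain d where d: "Determinant.det A = of_int d" using A(3) Ints_cases by blast
  have "d \<noteq> 0" using g pos d by auto
  then have "0 < d ^ 2" by simp
  then have "1 \<le> d ^ 2" by linarith
  then have d1: "1 \<le> Determinant.det A ^ 2" unfolding d
    by (metis of_int_le_iff of_int_1 of_int_power)
  have gb: "0 < gram_det bs" using g pos d1
    by (metis less_numeral_extra(1) less_le_trans zero_less_mult_pos)
  have "gram_det bs \<le> Determinant.det A ^ 2 * gram_det bs" using d1 gb by simp
  then show ?thesis using gb g by simp
qed

lemma perp_proj_eq:
  fixes V :: "'a::euclidean_space set"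
  assumes V: "subspace V" and xy: "x - y \<in> V" and orth: "\<forall>v\<in>V. v \<bullet> y = 0"
  shows "perp_proj V x = y"
  unfolding perp_proj_def
proof (rule the_equality)
  show "x - y \<in> V \<and> (\<forall>v\<in>V. v \<bullet> y = 0)" using xy orth by blast
next
  fix y' assume y': "x - y' \<in> V \<and> (\<forall>v\<in>V. v \<bullet> y' = 0)"
  have d: "y - y' \<in> V" using subspace_diff[OF V, of "x - y'" "x - y"] y' xy by simp
  have "(y - y') \<bullet> (y - y') = 0"
    using orth y' d by (simp add: inner_diff_right)
  then show "y' = y" by simp
qed

lemma perp_proj_ex:
  fixes V :: "'a::euclidean_space set"
  assumes V: "subspace V"
  shows "x - perp_proj V x \<in> V \<and> (\<forall>v\<in>V. v \<bullet> perp_proj V x = 0)"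
proof -
  obtain y z where y: "y \<in> span V" and z: "\<And>w. w \<in> span V \<Longrightarrow> z \<bullet> w = 0" and x: "x = y + z"
    using orthogonal_subspace_decomp_exists[of V x] unfolding real_inner_class.orthogonal_def by blast
  have sV: "span V = V" using V by simp
  have "perp_proj V x = z"
    by (rule perp_proj_eq[OF V]) (use y z x sV in \<open>auto simp: inner_commute\<close>)
  then show ?thesis using y z x sV by (auto simp: inner_commute)
qed

lemma perp_proj_linear:
  fixes V :: "'a::euclidean_space set"
  assumes V: "subspace V"
  shows "linear (perp_proj V)"
proof (rule linearI)
  fix x y
  show "perp_proj V (x + y) = perp_proj V x + perp_proj V y"
  proof (rule perp_proj_eq[OF V])
    have "(x + y) - (perp_proj V x + perp_proj V y) = (x - perp_proj V x) + (y - perp_proj V y)" by simp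
    then show "x + y - (perp_proj V x + perp_proj V y) \<in> V"
      using perp_proj_ex[OF V, of x] perp_proj_ex[OF V, of y] subspace_add[OF V] by metis
    show "\<forall>v\<in>V. v \<bullet> (perp_proj V x + perp_proj V y) = 0"
      using perp_proj_ex[OF V, of x] perp_proj_ex[OF V, of y] by (simp add: inner_add_right)
  qed
next
  fix c x
  show "perp_proj V (c *\<^sub>R x) = c *\<^sub>R perp_proj V x"
  proof (rule perp_proj_eq[OF V])
    have "c *\<^sub>R x - c *\<^sub>R perp_proj V x = c *\<^sub>R (x - perp_proj V x)" by (simp add: scaleR_diff_right)
    then show "c *\<^sub>R x - c *\<^sub>R perp_proj V x \<in> V"
      using perp_proj_ex[OF V, of x] subspace_mul[OF V] by metis
    show "\<forall>v\<in>V. v \<bullet> (c *\<^sub>R perp_proj V x) = 0"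
      using perp_proj_ex[OF V, of x] by simp
  qed
qed

lemma perp_proj_norm:
  fixes V :: "'a::euclidean_space set"
  assumes V: "subspace V"
  shows "norm (perp_proj V x) \<le> norm x"
proof -
  let ?p = "perp_proj V x"
  have o: "(x - ?p) \<bullet> ?p = 0" using perp_proj_ex[OF V, of x] by blast
  have "x \<bullet> x = (x - ?p) \<bullet> (x - ?p) + ?p \<bullet> ?p"
    using o by (simp add: inner_diff_left inner_diff_right inner_commute)
  then have "?p \<bullet> ?p \<le> x \<bullet> x" by simp
  then show ?thesis by (simp add: norm_le)
qed

lemma perp_proj_orth_fix:
  fixes V :: "'a::euclidean_space set"
  assumes V: "subspace V" and "\<forall>v\<in>V. v \<bullet> x = 0"
  shows "perp_proj V x = x"
  by (rule perp_proj_eq[OF V]) (use assms in \<open>auto simp: subspace_0\<close>)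

lemma Z_subspace_iff: "Z.subspace G \<longleftrightarrow> 0 \<in> G \<and> (\<forall>x\<in>G. \<forall>y\<in>G. x + y \<in> G) \<and> (\<forall>k::int. \<forall>x\<in>G. of_int k *\<^sub>R x \<in> G)"
  unfolding Z.subspace_def by auto

lemma lattice_basis_exists_aux:
  fixes D :: real
  assumes D: "D > 0" and S: "finite (S :: 'i set)"
  shows "\<forall>G::(real^'i) set. Z.subspace G \<longrightarrow> (\<forall>g\<in>G. \<forall>i. D * g$i \<in> \<int>) \<longrightarrow>
     (\<forall>g\<in>G. \<forall>i. i \<notin> S \<longrightarrow> g$i = 0) \<longrightarrow>
     (\<exists>bs. distinct bs \<and> independent (set bs) \<and> G = Z.span (set bs))"
  using S
proof (induction S rule: finite_induct)
  case empty
  show ?case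
  proof (intro allI impI)
    fix G :: "(real^'i) set" assume G: "Z.subspace G" "\<forall>g\<in>G. \<forall>i. i \<notin> {} \<longrightarrow> g$i = 0"
    have "\<forall>x\<in>G. x = 0"
    proof
      fix x assume "x \<in> G"
      then have "\<forall>i. x$i = 0$i" using G(2) by simp
      then show "x = 0" by (simp add: Finite_Cartesian_Product.vec_eq_iff)
    qed
    then have "G = {0}" using Z.subspace_0[OF G(1)] by blast
    then show "\<exists>bs. distinct bs \<and> independent (set bs) \<and> G = Z.span (set bs)"
      by (intro exI[of _ "[]"]) (auto simp: independent_empty)
  qed
next
  case (insert p S)
  show ?case
  proof (intro allI impI)
    fix G :: "(real^'i) set"
    assume G: "Z.subspace G" and int: "\<forall>g\<in>G. \<forall>i. D * g$i \<in> \<int>"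
      and supp: "\<forall>g\<in>G. \<forall>i. i \<notin> insert p S \<longrightarrow> g$i = 0"
    define G0 where "G0 = {g\<in>G. g$p = 0}"
    have G0s: "Z.subspace G0" using G unfolding G0_def Z_subspace_iff by auto
    have G0G: "G0 \<subseteq> G" by (auto simp: G0_def)
    have int0: "\<forall>g\<in>G0. \<forall>i. D * g$i \<in> \<int>" using int G0G by blast
    have supp0: "\<forall>g\<in>G0. \<forall>i. i \<notin> S \<longrightarrow> g$i = 0"
    proof (intro ballI allI impI)
      fix g i assume g: "g \<in> G0" and i: "i \<notin> S"
      show "g$i = 0"
      proof (cases "i = p")
        case True then show ?thesis using g by (simp add: G0_def)
      next
        case False then show ?thesis using g i supp G0G by blast
      qed
    qed
    obtain bs0 where bs0: "distinct bs0" "independent (set bs0)" "G0 = Z.span (set bs0)"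
      using insert.IH G0s int0 supp0 by blast
    show "\<exists>bs. distinct bs \<and> independent (set bs) \<and> G = Z.span (set bs)"
    proof (cases "\<forall>g\<in>G. g$p = 0")
      case True
      then have "G = G0" by (auto simp: G0_def)
      then show ?thesis using bs0 by blast
    next
      case False
      then obtain g where g: "g \<in> G" "g$p \<noteq> 0" by blast
      define N where "N = {n::nat. 0 < n \<and> (\<exists>h\<in>G. D * h$p = real n)}"
      obtain z where z: "D * g$p = of_int z" using int g(1) Ints_cases by metis
      have "z \<noteq> 0" using z g D by auto
      have "N \<noteq> {}"
      proof (cases "z > 0")
        case True
        then have "nat z \<in> N" unfolding N_def using g z by (intro CollectI conjI bexI[of _ g]) auto
        then show ?thesis by blast
      next
        case False
        then have zn: "z < 0" using \<open>z \<noteq> 0\<close> by simp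
        have "-g \<in> G" using Z.subspace_neg[OF G g(1)] by simp
        then have "nat (-z) \<in> N" unfolding N_def using zn z by (intro CollectI conjI bexI[of _ "-g"]) auto
        then show ?thesis by blast
      qed
      define n0 where "n0 = (LEAST n. n \<in> N)"
      have n0N: "n0 \<in> N" unfolding n0_def using \<open>N \<noteq> {}\<close> by (metis LeastI ex_in_conv)
      then obtain q where q: "q \<in> G" "D * q$p = real n0" and n0pos: "0 < n0" unfolding N_def by auto
      have qp: "q$p \<noteq> 0" using q n0pos by auto
      have red: "\<exists>c::int. h - of_int c *\<^sub>R q \<in> G0" if h: "h \<in> G" for h
      proof -
        obtain v where v: "D * h$p = of_int v" using int h Ints_cases by metis
        define c where "c = v div int n0"
        define rr where "rr = v mod int n0"
        have vcr: "v = c * int n0 + rr" by (simp add: c_def rr_def)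
        have rr0: "0 \<le> rr" "rr < int n0" using n0pos by (auto simp: rr_def)
        have hG: "h - of_int c *\<^sub>R q \<in> G"
          using Z.subspace_diff[OF G h Z.subspace_scale[OF G q(1), of c]] by simp
        have val: "D * (h - of_int c *\<^sub>R q)$p = of_int rr"
          using v q(2) vcr by (simp add: algebra_simps)
        have "rr = 0"
        proof (rule ccontr)
          assume "rr \<noteq> 0"
          then have "nat rr \<in> N" unfolding N_def using rr0 val hG by (intro CollectI conjI bexI[of _ "h - of_int c *\<^sub>R q"]) auto
          then have "n0 \<le> nat rr" unfolding n0_def by (rule Least_le)
          then show False using rr0 by linarith
        qed
        then have "(h - of_int c *\<^sub>R q)$p = 0" using val D by simp
        then show ?thesis using hG by (auto simp: G0_def)
      qed
      have Geq: "G = Z.span (insert q (set bs0))"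
      proof
        show "G \<subseteq> Z.span (insert q (set bs0))"
        proof
          fix h assume "h \<in> G"
          then obtain c where "h - of_int c *\<^sub>R q \<in> G0" using red by blast
          then show "h \<in> Z.span (insert q (set bs0))" unfolding Z.span_insert bs0(3)[symmetric] by auto
        qed
        show "Z.span (insert q (set bs0)) \<subseteq> G"
        proof
          fix h assume "h \<in> Z.span (insert q (set bs0))"
          then obtain k where k: "h - of_int k *\<^sub>R q \<in> G0" unfolding Z.span_insert bs0(3)[symmetric] by auto
          have "h = (h - of_int k *\<^sub>R q) + of_int k *\<^sub>R q" by simp
          then show "h \<in> G" using k G0G Z.subspace_add[OF G _ Z.subspace_scale[OF G q(1)]] by (metis subsetD)
        qed
      qed
      have spsub: "span (set bs0) \<subseteq> {x. x$p = 0}"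
      proof (rule span_minimal)
        show "set bs0 \<subseteq> {x. x$p = 0}" using bs0(3) Z.span_superset[of "set bs0"] by (auto simp: G0_def)
        show "subspace {x::real^'i. x$p = 0}" by (auto simp: subspace_def)
      qed
      have qn: "q \<notin> span (set bs0)" using spsub qp by auto
      then have qn': "q \<notin> set bs0" using span_base by blast
      show ?thesis
        by (intro exI[of _ "q # bs0"]) (use bs0 qn qn' Geq in \<open>auto simp: independent_insert\<close>)
    qed
  qed
qed

lemma lattice_basis_exists:
  fixes G :: "(real^'i) set" and D :: real
  assumes G: "Z.subspace G" and D: "D > 0" and int: "\<forall>g\<in>G. \<forall>i. D * g$i \<in> \<int>"
  shows "\<exists>bs. lattice_basis G bs"
proof -
  have "finite (UNIV :: 'i set)" by simp
  from lattice_basis_exists_aux[OF D this] G int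
  show ?thesis unfolding lattice_basis_def int_span_Z by blast
qed

definition ratv :: "real^'i \<Rightarrow> bool" where "ratv x \<longleftrightarrow> (\<forall>i. x$i \<in> \<rat>)"

lemma ratv_add: "ratv x \<Longrightarrow> ratv y \<Longrightarrow> ratv (x + y)" by (simp add: ratv_def)
lemma ratv_diff: "ratv x \<Longrightarrow> ratv y \<Longrightarrow> ratv (x - y)" by (simp add: ratv_def)
lemma ratv_scale: "c \<in> \<rat> \<Longrightarrow> ratv x \<Longrightarrow> ratv (c *\<^sub>R x)" by (simp add: ratv_def)
lemma ratv_zero: "ratv 0" by (simp add: ratv_def)
lemma ratv_sum: "(\<And>x. x \<in> A \<Longrightarrow> ratv (f x)) \<Longrightarrow> ratv (sum f A)"
  by (induction A rule: infinite_finite_induct) (auto simp: ratv_zero ratv_add)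
lemma ratv_inner: "ratv x \<Longrightarrow> ratv y \<Longrightarrow> x \<bullet> y \<in> \<rat>"
  unfolding inner_vec_def ratv_def by (auto intro!: Rats_sum)

lemma rat_orth_basis:
  fixes B :: "(real^'i) set"
  assumes "finite B" "\<forall>b\<in>B. ratv b"
  shows "\<exists>T. finite T \<and> (\<forall>t\<in>T. ratv t) \<and> pairwise real_inner_class.orthogonal T \<and> span T = span B"
  using assms
proof (induction B rule: finite_induct)
  case empty
  show ?case by (intro exI[of _ "{}"]) auto
next
  case (insert a B)
  then obtain T where T: "finite T" "\<forall>t\<in>T. ratv t" "pairwise real_inner_class.orthogonal T" "span T = span B"
    by auto
  define a' where "a' = a - (\<Sum>b\<in>T. (b \<bullet> a / (b \<bullet> b)) *\<^sub>R b)"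
  have ra: "ratv a" using insert by auto
  have ra': "ratv a'" unfolding a'_def
    using T(2) ra by (intro ratv_diff ratv_sum ratv_scale) (auto intro!: Rats_divide ratv_inner)
  have orth: "\<forall>y\<in>T. real_inner_class.orthogonal a' y"
  proof
    fix y assume y: "y \<in> T"
    have "real_inner_class.orthogonal y a'"
      unfolding a'_def by (rule Gram_Schmidt_step[OF T(3) span_base[OF y]])
    then show "real_inner_class.orthogonal a' y" by (simp add: orthogonal_commute)
  qed
  have po: "pairwise real_inner_class.orthogonal (insert a' T)"
    using pairwise_orthogonal_insert[OF T(3)] orth by blast
  have "a - a' \<in> span T" unfolding a'_def
    by (simp add: span_sum span_mul span_base)
  then have "span (insert a' T) = span (insert a T)"
    by (metis eq_span_insert_eq)
  also have "\<dots> = span (insert a B)"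
    using T(4) by (simp add: span_insert)
  finally show ?case using T ra' po by (intro exI[of _ "insert a' T"]) auto
qed

lemma rat_proj:
  fixes M :: "(real^'i) set"
  assumes M: "\<forall>m\<in>M. ratv m" and x: "ratv x"
  shows "ratv (perp_proj (span M) x)"
proof -
  obtain B where B: "B \<subseteq> M" "independent B" "M \<subseteq> span B" "card B = dim M"
    using basis_exists by blast
  have fB: "finite B" using B(2) by (simp add: independent_imp_finite)
  have sB: "span B = span M"
  proof
    show "span B \<subseteq> span M" using B(1) by (rule span_mono)
    show "span M \<subseteq> span B" using B(3) by (simp add: span_minimal)
  qed
  obtain T where T: "finite T" "\<forall>t\<in>T. ratv t" "pairwise real_inner_class.orthogonal T" "span T = span M"
    using rat_orth_basis[OF fB] B(1) M sB by blast
  define y where "y = x - (\<Sum>b\<in>T. (b \<bullet> x / (b \<bullet> b)) *\<^sub>R b)"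
  have "perp_proj (span M) x = y"
  proof (rule perp_proj_eq)
    show "subspace (span M)" by simp
    show "x - y \<in> span M" unfolding y_def T(4)[symmetric]
      by (simp add: span_sum span_mul span_base)
    show "\<forall>v\<in>span M. v \<bullet> y = 0"
      using Gram_Schmidt_step[OF T(3)] T(4) unfolding y_def real_inner_class.orthogonal_def by blast
  qed
  moreover have "ratv y" unfolding y_def
    using T(2) x by (intro ratv_diff ratv_sum ratv_scale) (auto intro!: Rats_divide ratv_inner)
  ultimately show ?thesis by simp
qed

lemma rat_denom:
  fixes F :: "real set"
  assumes "finite F" "F \<subseteq> \<rat>"
  shows "\<exists>D::int. D > 0 \<and> (\<forall>r\<in>F. of_int D * r \<in> \<int>)"
  using assms
proof (induction F rule: finite_induct)
  case empty
  show ?case by (intro exI[of _ 1]) auto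
next
  case (insert r F)
  then obtain D :: int where D: "D > 0" "\<forall>s\<in>F. of_int D * s \<in> \<int>" by auto
  have "r \<in> \<rat>" using insert by auto
  then obtain a b where ab: "r = of_int a / of_int b" "b > 0" by (rule Rats_cases')
  have "of_int (D * b) * r = of_int (D * a)" using ab by (simp add: field_simps)
  moreover have "of_int (D * b) * s \<in> \<int>" if "s \<in> F" for s
  proof -
    have "of_int (D * b) * s = of_int b * (of_int D * s)" by simp
    then show ?thesis using D that by (metis Ints_mult Ints_of_int)
  qed
  ultimately show ?case using D ab by (intro exI[of _ "D * b"]) auto
qed

lemma vec_axis_expansion: "(x::real^'i) = (\<Sum>p\<in>UNIV. x$p *\<^sub>R axis p 1)"
proof -
  have "(\<Sum>p\<in>UNIV. x$p *\<^sub>R axis p 1) $ i = x $ i" for i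
  proof -
    have "(\<Sum>p\<in>UNIV. x$p *\<^sub>R axis p 1) $ i = (\<Sum>p\<in>UNIV. if p = i then x$p else 0)"
      unfolding sum_component by (rule sum.cong) (auto simp: axis_def)
    also have "\<dots> = x$i" by simp
    finally show ?thesis .
  qed
  then show ?thesis by (simp add: Finite_Cartesian_Product.vec_eq_iff)
qed

lemma proj_denom:
  fixes T M :: "(real^'i) set" and D :: int
  assumes D: "D > 0" and DT: "\<forall>t\<in>T. \<forall>i. of_int D * t$i \<in> \<int>" and MT: "M \<subseteq> T"
  shows "\<exists>D'::real. D' > 0 \<and> (\<forall>t\<in>T. \<forall>i. D' * (perp_proj (span M) t)$i \<in> \<int>)"
proof -
  let ?P = "perp_proj (span M)"
  have lin: "linear ?P" by (rule perp_proj_linear) simp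
  have Mr: "\<forall>m\<in>M. ratv m"
  proof
    fix m assume "m \<in> M"
    then have "\<forall>i. of_int D * m$i \<in> \<int>" using DT MT by blast
    then have "\<forall>i. m$i \<in> \<rat>"
    proof (intro allI)
      fix i assume h: "\<forall>i. of_int D * m$i \<in> \<int>"
      have "m$i = (of_int D * m$i) / of_int D" using D by simp
      then show "m$i \<in> \<rat>" using h Ints_subset_Rats by (metis Rats_divide Rats_of_int subsetD)
    qed
    then show "ratv m" by (simp add: ratv_def)
  qed
  have rax: "ratv (?P (axis p 1))" for p
    by (rule rat_proj[OF Mr]) (simp add: ratv_def axis_def)
  define F where "F = (\<lambda>(p,i). ?P (axis p 1) $ i) ` UNIV"
  have "finite F" unfolding F_def by simp
  moreover have "F \<subseteq> \<rat>" unfolding F_def using rax by (auto simp: ratv_def)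
  ultimately obtain E :: int where E: "E > 0" "\<forall>r\<in>F. of_int E * r \<in> \<int>" using rat_denom by blast
  have Ep: "of_int E * ?P (axis p 1) $ i \<in> \<int>" for p i using E(2) unfolding F_def by auto
  show ?thesis
  proof (intro exI[of _ "of_int (D * E)"] conjI ballI allI)
    show "real_of_int (D * E) > 0" using D E by simp
    fix t i assume t: "t \<in> T"
    have "?P t = ?P (\<Sum>p\<in>UNIV. t$p *\<^sub>R axis p 1)" using vec_axis_expansion[of t] by simp
    also have "\<dots> = (\<Sum>p\<in>UNIV. t$p *\<^sub>R ?P (axis p 1))"
      using lin by (simp add: linear_sum linear_scale)
    finally have "of_int (D * E) * ?P t $ i = (\<Sum>p\<in>UNIV. (of_int D * t$p) * (of_int E * ?P (axis p 1) $ i))"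
      by (simp add: sum_component sum_distrib_left ac_simps)
    also have "\<dots> \<in> \<int>" by (intro Ints_sum, rule Ints_mult) (use DT t Ep in auto)
    finally show "real_of_int (D * E) * ?P t $ i \<in> \<int>" .
  qed
qed

lemma prod_list_bound:
  fixes f :: "'b \<Rightarrow> real"
  assumes "\<forall>x\<in>set xs. 0 \<le> f x \<and> f x \<le> c"
  shows "(\<Prod>x\<leftarrow>xs. f x) \<le> c ^ length xs"
  using assms
proof (induction xs)
  case Nil then show ?case by simp
next
  case (Cons a xs)
  have "0 \<le> (\<Prod>x\<leftarrow>xs. f x)" using Cons.prems by (induction xs) auto
  then show ?case using Cons by (simp, intro mult_mono) auto
qed

lemma quot_slope_bound:
  fixes T M B0 :: "(real^'p) set" and D :: int and C :: real
  assumes Ts: "Z.subspace T" and D: "D > 0" and DT: "\<forall>t\<in>T. \<forall>i. of_int D * t$i \<in> \<int>"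
    and MT: "M \<subseteq> T" and B0T: "B0 \<subseteq> T" and TB0: "T \<subseteq> span B0"
    and Cb: "\<forall>x\<in>B0. norm x \<le> C" and C1: "1 \<le> C"
  shows "- ln C \<le> slope (lattice_quot T M)"
proof -
  let ?V = "span M"
  let ?P = "perp_proj ?V"
  have sV: "subspace ?V" by simp
  have lin: "linear ?P" by (rule perp_proj_linear[OF sV])
  define Q where "Q = lattice_quot T M"
  have Qd: "Q = ?P ` T" unfolding Q_def lattice_quot_def by simp
  have Qs: "Z.subspace Q"
    unfolding Z_subspace_iff Qd
  proof (intro conjI ballI allI)
    show "0 \<in> ?P ` T" using Z.subspace_0[OF Ts] linear_0[OF lin] by (metis image_eqI)
  next
    fix x y assume "x \<in> ?P ` T" "y \<in> ?P ` T"
    then obtain a b where "a \<in> T" "b \<in> T" "x = ?P a" "y = ?P b" by auto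
    then show "x + y \<in> ?P ` T" using Z.subspace_add[OF Ts] linear_add[OF lin] by (metis image_eqI)
  next
    fix k :: int and x assume "x \<in> ?P ` T"
    then obtain a where "a \<in> T" "x = ?P a" by auto
    then show "of_int k *\<^sub>R x \<in> ?P ` T" using Z.subspace_scale[OF Ts] linear_scale[OF lin] by (metis image_eqI)
  qed
  obtain D' where D': "D' > 0" "\<forall>t\<in>T. \<forall>i. D' * (?P t)$i \<in> \<int>" using proj_denom[OF D DT MT] by blast
  have Qint: "\<forall>g\<in>Q. \<forall>i. D' * g$i \<in> \<int>" using D'(2) Qd by auto
  have "\<exists>bs. lattice_basis Q bs" by (rule lattice_basis_exists[OF Qs D'(1) Qint])
  define bs0 where "bs0 = (SOME bs. lattice_basis Q bs)"
  have lb: "lattice_basis Q bs0" unfolding bs0_def using \<open>\<exists>bs. lattice_basis Q bs\<close> by (rule someI_ex)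
  have cov: "covol Q = sqrt (gram_det bs0)" unfolding covol_def bs0_def ..
  have bsQ: "Q = int_span (set bs0)" and ind0: "independent (set bs0)" and dis0: "distinct bs0"
    using lb unfolding lattice_basis_def by auto
  have spQ: "span Q = span (set bs0)"
  proof
    show "span Q \<subseteq> span (set bs0)" unfolding bsQ int_span_Z
      using Z_span_subset_span by (metis span_minimal subspace_span)
    show "span (set bs0) \<subseteq> span Q" unfolding bsQ int_span_Z
      by (rule span_mono[OF Z.span_superset])
  qed
  have r: "lattice_rank Q = length bs0"
    unfolding lattice_rank_def spQ dim_span using dim_eq_card_independent[OF ind0] distinct_card[OF dis0] by simp
  show ?thesis
  proof (cases "length bs0 = 0")
    case True
    then show ?thesis unfolding Q_def[symmetric] slope_def r using C1 by simp
  next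
    case False
    let ?r = "length bs0"
    define PB where "PB = ?P ` B0"
    have PBQ: "PB \<subseteq> Q" unfolding PB_def Qd using B0T by auto
    have spPB: "span PB = span Q"
    proof
      show "span PB \<subseteq> span Q" using PBQ by (rule span_mono)
      have "Q \<subseteq> ?P ` span B0" unfolding Qd using TB0 by auto
      also have "\<dots> = span PB" unfolding PB_def using span_linear_image[OF lin] by simp
      finally show "span Q \<subseteq> span PB" by (simp add: span_minimal)
    qed
    obtain Bs where Bs: "Bs \<subseteq> PB" "independent Bs" "PB \<subseteq> span Bs" "card Bs = dim PB"
      using basis_exists by blast
    have fBs: "finite Bs" using Bs(2) by (simp add: independent_imp_finite)
    obtain sl where sl: "set sl = Bs" "distinct sl" using finite_distinct_list[OF fBs] by blast
    have "dim PB = ?r"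
      using spPB spQ dim_span[of PB] dim_span[of "set bs0"] dim_eq_card_independent[OF ind0] distinct_card[OF dis0]
      by simp
    then have lsl: "length sl = ?r" using sl Bs(4) distinct_card[OF sl(2)] by simp
    have gs: "0 < gram_det bs0 \<and> gram_det bs0 \<le> gram_det sl"
      by (rule gram_sub) (use lsl sl Bs PBQ bsQ in auto)
    have "gram_det sl \<le> (\<Prod>x\<leftarrow>sl. x \<bullet> x)" using hadamard[of sl] by simp
    also have "\<dots> \<le> (C^2) ^ length sl"
    proof (rule prod_list_bound, intro ballI conjI)
      fix x assume "x \<in> set sl"
      then have "x \<in> PB" using sl Bs by auto
      then obtain b where b: "b \<in> B0" "x = ?P b" unfolding PB_def by auto
      have "norm x \<le> C" using perp_proj_norm[OF sV, of b] Cb b by force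
      then have "norm x ^ 2 \<le> C ^ 2" by (simp add: power_mono)
      then show "x \<bullet> x \<le> C^2" by (simp add: power2_norm_eq_inner)
    qed simp
    finally have gle: "gram_det bs0 \<le> C ^ (2 * ?r)" using gs lsl by (simp add: power_mult)
    have g0: "0 < gram_det bs0" using gs by simp
    have "sqrt (gram_det bs0) \<le> sqrt (C ^ (2 * ?r))" using gle by simp
    also have "\<dots> = C ^ ?r" using C1 by (simp add: power_mult real_sqrt_power)
    finally have sle: "sqrt (gram_det bs0) \<le> C ^ ?r" .
    have Cp: "0 < C ^ ?r" using C1 by simp
    have "ln (sqrt (gram_det bs0)) \<le> ln (C ^ ?r)" using sle g0 Cp by (subst ln_le_cancel_iff) auto
    also have "\<dots> = real ?r * ln C" using C1 by (simp add: ln_realpow)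
    finally have "ln (covol Q) \<le> real ?r * ln C" unfolding cov .
    then have "(1 / real ?r) * ln (covol Q) \<le> (1 / real ?r) * (real ?r * ln C)"
      by (intro mult_left_mono) auto
    then have "(1 / real ?r) * ln (covol Q) \<le> ln C" using False by simp
    then show ?thesis unfolding Q_def[symmetric] slope_def r by simp
  qed
qed

lemma gram_single: "gram_det [f] = f \<bullet> f"
  using gram_snoc_orth[of "[]" f] by simp

lemma lattice_basis_facts:
  assumes "lattice_basis L bs"
  shows "L = int_span (set bs)" "independent (set bs)" "distinct bs" "span L = span (set bs)"
    "length bs = dim (span L)"
proof -
  show L: "L = int_span (set bs)" and ind: "independent (set bs)" and dis: "distinct bs"
    using assms unfolding lattice_basis_def by auto
  show sp: "span L = span (set bs)"
  proof
    show "span L \<subseteq> span (set bs)" unfolding L int_span_Z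
      using Z_span_subset_span by (metis span_minimal subspace_span)
    show "span (set bs) \<subseteq> span L" unfolding L int_span_Z
      by (rule span_mono[OF Z.span_superset])
  qed
  show "length bs = dim (span L)"
    unfolding sp dim_span using dim_eq_card_independent[OF ind] distinct_card[OF dis] by simp
qed

lemma covol_eq_basis:
  assumes lb: "lattice_basis L bs"
  shows "covol L = sqrt (gram_det bs)"
proof -
  define bs0 where "bs0 = (SOME bs. lattice_basis L bs)"
  have lb0: "lattice_basis L bs0" unfolding bs0_def using lb by (rule someI)
  have l: "length bs0 = length bs" using lattice_basis_facts(5)[OF lb0] lattice_basis_facts(5)[OF lb] by simp
  have s1: "set bs0 \<subseteq> int_span (set bs)" using lattice_basis_facts(1)[OF lb] lattice_basis_facts(1)[OF lb0]
    Z.span_superset[of "set bs0"] int_span_Z by metis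
  have s2: "set bs \<subseteq> int_span (set bs0)" using lattice_basis_facts(1)[OF lb] lattice_basis_facts(1)[OF lb0]
    Z.span_superset[of "set bs"] int_span_Z by metis
  have "gram_det bs \<le> gram_det bs0"
    using gram_sub[OF l s1 lattice_basis_facts(2,3)[OF lb0]] by simp
  moreover have "gram_det bs0 \<le> gram_det bs"
    using gram_sub[OF l[symmetric] s2 lattice_basis_facts(2,3)[OF lb]] by simp
  ultimately have "gram_det bs0 = gram_det bs" by simp
  then show ?thesis unfolding covol_def bs0_def[symmetric] by simp
qed

lemma quot_line_slope:
  fixes T :: "(real^'p) set" and f :: "real^'p"
  assumes Ts: "Z.subspace T" and fT: "f \<in> T" and ff: "f \<bullet> f = 1" and intf: "\<forall>t\<in>T. t \<bullet> f \<in> \<int>"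
  shows "\<exists>M. primitive_sublattice M T \<and> M \<noteq> T \<and> slope (lattice_quot T M) = 0"
proof -
  define M where "M = {t\<in>T. t \<bullet> f = 0}"
  have MT: "M \<subseteq> T" by (auto simp: M_def)
  have spM: "span M \<subseteq> {x. x \<bullet> f = 0}"
    by (rule span_minimal) (auto simp: M_def subspace_def inner_add_left)
  have prim: "primitive_sublattice M T"
    unfolding primitive_sublattice_def using MT spM span_superset[of M] by (auto simp: M_def)
  have "f \<notin> M" using ff by (simp add: M_def)
  then have MnT: "M \<noteq> T" using fT by blast
  have Pt: "perp_proj (span M) t = (t \<bullet> f) *\<^sub>R f" if t: "t \<in> T" for t
  proof (rule perp_proj_eq)
    show "subspace (span M)" by simp
    obtain c where c: "t \<bullet> f = of_int c" using intf t Ints_cases by metis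
    have "t - (t \<bullet> f) *\<^sub>R f \<in> T" unfolding c using Z.subspace_diff[OF Ts t Z.subspace_scale[OF Ts fT]] by simp
    moreover have "(t - (t \<bullet> f) *\<^sub>R f) \<bullet> f = 0" using ff by (simp add: inner_diff_left)
    ultimately have "t - (t \<bullet> f) *\<^sub>R f \<in> M" by (simp add: M_def)
    then show "t - (t \<bullet> f) *\<^sub>R f \<in> span M" by (rule span_base)
    show "\<forall>v\<in>span M. v \<bullet> ((t \<bullet> f) *\<^sub>R f) = 0" using spM by auto
  qed
  define Q where "Q = lattice_quot T M"
  have Q: "Q = int_span (set [f])"
  proof
    show "Q \<subseteq> int_span (set [f])"
    proof
      fix q assume "q \<in> Q"
      then obtain t where t: "t \<in> T" "q = (t \<bullet> f) *\<^sub>R f" unfolding Q_def lattice_quot_def using Pt by auto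
      obtain c where c: "t \<bullet> f = of_int c" using intf t Ints_cases by metis
      show "q \<in> int_span (set [f])" unfolding int_span_Z using t c Z.span_singleton by auto
    qed
    show "int_span (set [f]) \<subseteq> Q"
    proof
      fix q assume "q \<in> int_span (set [f])"
      then obtain c where c: "q = of_int c *\<^sub>R f" unfolding int_span_Z using Z.span_singleton by auto
      have cT: "of_int c *\<^sub>R f \<in> T" using Z.subspace_scale[OF Ts fT] by simp
      have "perp_proj (span M) (of_int c *\<^sub>R f) = q" using Pt[OF cT] c ff by simp
      then show "q \<in> Q" unfolding Q_def lattice_quot_def using cT by force
    qed
  qed
  have f0: "f \<noteq> 0" using ff by auto
  have lb: "lattice_basis Q [f]" unfolding lattice_basis_def using Q f0 by (simp add: independent_insert independent_empty)
  have "covol Q = 1" using covol_eq_basis[OF lb] gram_single[of f] ff by simp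
  then have "slope Q = 0" unfolding slope_def by simp
  then show ?thesis using prim MnT unfolding Q_def by blast
qed

lemma min_slope_le0:
  fixes T B0 :: "(real^'p) set" and D :: int and C :: real and f :: "real^'p"
  assumes Ts: "Z.subspace T" and fT: "f \<in> T" and ff: "f \<bullet> f = 1" and intf: "\<forall>t\<in>T. t \<bullet> f \<in> \<int>"
    and D: "D > 0" and DT: "\<forall>t\<in>T. \<forall>i. of_int D * t$i \<in> \<int>"
    and B0T: "B0 \<subseteq> T" and TB0: "T \<subseteq> span B0"
    and Cb: "\<forall>x\<in>B0. norm x \<le> C" and C1: "1 \<le> C"
  shows "min_slope T \<le> 0"
proof -
  let ?X = "{slope (lattice_quot T M) | M. primitive_sublattice M T \<and> M \<noteq> T}"
  have "0 \<in> ?X" using quot_line_slope[OF Ts fT ff intf] by auto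
  moreover have "bdd_below ?X"
  proof (rule bdd_belowI)
    fix x assume "x \<in> ?X"
    then obtain M where M: "primitive_sublattice M T" "x = slope (lattice_quot T M)" by auto
    have "M \<subseteq> T" using M(1) unfolding primitive_sublattice_def by blast
    then show "- ln C \<le> x" using quot_slope_bound[OF Ts D DT _ B0T TB0 Cb C1] M(2) by blast
  qed
  ultimately have "Inf ?X \<le> 0" by (rule cInf_lower)
  then show ?thesis unfolding min_slope_def .
qed

lemma axis_comp: "axis i c $ j = (if j = i then c else 0)"
  by (simp add: axis_def)

lemma sum_axis_comp: "(\<Sum>i\<in>I. f i *\<^sub>R axis i (1::real)) $ j = (if j \<in> I then f j else 0)"
proof -
  have "(\<Sum>i\<in>I. f i *\<^sub>R axis i (1::real)) $ j = (\<Sum>i\<in>I. if i = j then f i else 0)"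
    unfolding sum_component by (rule sum.cong) (auto simp: axis_comp)
  also have "\<dots> = (if j \<in> I then f j else 0)"
    by (cases "finite I") (auto simp: sum.delta)
  finally show ?thesis .
qed

lemma int_points_Zsub: "Z.subspace (int_points :: (real^'n) set)"
  unfolding Z_subspace_iff int_points_def by auto

lemma inner_int_points: "x \<in> int_points \<Longrightarrow> y \<in> int_points \<Longrightarrow> x \<bullet> y \<in> \<int>"
  unfolding int_points_def inner_vec_def by (auto intro!: Ints_sum Ints_mult)

definition wv :: "'n \<Rightarrow> 'n \<Rightarrow> nat \<Rightarrow> real^'n" where "wv a b k = axis a 1 + real k *\<^sub>R axis b 1"
definition Sg :: "'n set \<Rightarrow> 'n \<Rightarrow> 'n \<Rightarrow> nat \<Rightarrow> (real^'n) set" where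
  "Sg I a b k = insert (wv a b k) ((\<lambda>i. axis i 1) ` I)"
definition Lam :: "'n set \<Rightarrow> 'n \<Rightarrow> 'n \<Rightarrow> nat \<Rightarrow> (real^'n) set" where
  "Lam I a b k = span (Sg I a b k) \<inter> int_points"

locale conc =
  fixes I :: "'n::finite set" and a b i0 j0 :: 'n and k :: nat
  assumes ab: "a \<noteq> b" "a \<notin> I" "b \<notin> I" and i0: "i0 \<in> I" and j0: "j0 \<notin> I" "j0 \<noteq> a" "j0 \<noteq> b"
    and k: "k \<ge> 1"
begin

abbreviation "w \<equiv> wv a b k"
abbreviation "S \<equiv> Sg I a b k"
abbreviation "L \<equiv> Lam I a b k"
abbreviation "K \<equiv> 1 + real k ^ 2"

lemma w_comp: "w $ j = (if j = a then 1 else if j = b then real k else 0)"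
  using ab by (simp add: wv_def axis_comp)

lemma ww: "w \<bullet> w = K"
  unfolding wv_def using ab by (simp add: inner_add_left inner_add_right inner_axis_axis power2_eq_square)

lemma w_axis: "i \<in> I \<Longrightarrow> w \<bullet> axis i 1 = 0"
  using ab by (auto simp: inner_axis w_comp)

lemma span_rep: "x \<in> span S \<Longrightarrow> x$b = real k * x$a \<and> (\<forall>j. j \<notin> I \<longrightarrow> j \<noteq> a \<longrightarrow> j \<noteq> b \<longrightarrow> x$j = 0)"
proof -
  assume x: "x \<in> span S"
  have "span S \<subseteq> {x. x$b = real k * x$a \<and> (\<forall>j. j \<notin> I \<longrightarrow> j \<noteq> a \<longrightarrow> j \<noteq> b \<longrightarrow> x$j = 0)}"
  proof (rule span_minimal)
    show "S \<subseteq> {x. x$b = real k * x$a \<and> (\<forall>j. j \<notin> I \<longrightarrow> j \<noteq> a \<longrightarrow> j \<noteq> b \<longrightarrow> x$j = 0)}"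
      unfolding Sg_def using ab by (auto simp: w_comp axis_comp)
    show "subspace {x::real^'n. x$b = real k * x$a \<and> (\<forall>j. j \<notin> I \<longrightarrow> j \<noteq> a \<longrightarrow> j \<noteq> b \<longrightarrow> x$j = 0)}"
      by (auto simp: subspace_def algebra_simps)
  qed
  then show ?thesis using x by blast
qed

lemma span_rep2: "x \<in> span S \<Longrightarrow> x = (\<Sum>i\<in>I. x$i *\<^sub>R axis i 1) + x$a *\<^sub>R w"
proof -
  assume x: "x \<in> span S"
  note r = span_rep[OF x]
  show ?thesis
  proof (subst Finite_Cartesian_Product.vec_eq_iff, intro allI)
    fix j
    have e: "((\<Sum>i\<in>I. x$i *\<^sub>R axis i 1) + x$a *\<^sub>R w) $ j = (if j \<in> I then x$j else 0) + x$a * w$j"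
      by (simp only: vector_add_component vector_scaleR_component sum_axis_comp) simp
    show "x $ j = ((\<Sum>i\<in>I. x$i *\<^sub>R axis i 1) + x$a *\<^sub>R w) $ j"
      unfolding e using r ab by (auto simp: w_comp)
  qed
qed

lemma S_int: "S \<subseteq> int_points"
  unfolding Sg_def int_points_def by (auto simp: w_comp axis_comp)

lemma L_eq: "L = int_span S"
proof
  show "int_span S \<subseteq> L"
    unfolding Lam_def int_span_Z using Z_span_subset_span[of S] Z.span_minimal[OF S_int int_points_Zsub] by blast
  show "L \<subseteq> int_span S"
  proof
    fix x assume "x \<in> L"
    then have x: "x \<in> span S" "x \<in> int_points" unfolding Lam_def by auto
    have xi: "x$j \<in> \<int>" for j using x(2) by (simp add: int_points_def)
    have "(\<Sum>i\<in>I. x$i *\<^sub>R axis i 1) + x$a *\<^sub>R w \<in> Z.span S"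
    proof (rule Z.span_add)
      show "(\<Sum>i\<in>I. x$i *\<^sub>R axis i 1) \<in> Z.span S"
      proof (rule Z.span_sum)
        fix i assume i: "i \<in> I"
        obtain c where c: "x$i = of_int c" using xi Ints_cases by metis
        have "axis i 1 \<in> Z.span S" using i by (intro Z.span_base) (simp add: Sg_def)
        then show "x$i *\<^sub>R axis i 1 \<in> Z.span S" unfolding c by (rule Z.span_scale)
      qed
      obtain c where c: "x$a = of_int c" using xi Ints_cases by metis
      have "w \<in> Z.span S" by (intro Z.span_base) (simp add: Sg_def)
      then show "x$a *\<^sub>R w \<in> Z.span S" unfolding c by (rule Z.span_scale)
    qed
    then show "x \<in> int_span S" using span_rep2[OF x(1)] by (simp add: int_span_Z)
  qed
qed

lemma S_sub_L: "S \<subseteq> L"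
  unfolding Lam_def using S_int span_superset[of S] by blast

lemma span_L: "span L = span S"
proof
  show "span L \<subseteq> span S" unfolding Lam_def by (simp add: span_minimal)
  show "span S \<subseteq> span L" using S_sub_L by (rule span_mono)
qed

definition Il :: "'n list" where "Il = (SOME l. distinct l \<and> set l = I)"

lemma Il: "distinct Il" "set Il = I"
proof -
  have "\<exists>l. distinct l \<and> set l = I" using finite_distinct_list[of I] by auto
  then have "distinct Il \<and> set Il = I" unfolding Il_def by (rule someI_ex)
  then show "distinct Il" "set Il = I" by auto
qed

definition sl :: "(real^'n) list" where "sl = w # map (\<lambda>i. axis i 1) Il"

lemma w_notin: "w \<notin> (\<lambda>i. axis i 1) ` I"
proof
  assume "w \<in> (\<lambda>i. axis i 1) ` I"
  then obtain i where "i \<in> I" "w = axis i 1" by auto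
  then have "w $ b = 0" using ab by (auto simp: axis_comp)
  moreover have "b \<noteq> a" using ab by auto
  ultimately show False using k by (simp add: w_comp)
qed

lemma sl_set: "set sl = S" unfolding sl_def Sg_def using Il by auto

lemma sl_distinct: "distinct sl"
  unfolding sl_def using Il w_notin by (auto simp: distinct_map inj_on_def axis_eq_axis)

lemma S_orth: "\<forall>u\<in>S. \<forall>v\<in>S. u \<noteq> v \<longrightarrow> u \<bullet> v = 0"
  unfolding Sg_def using w_axis by (auto simp: inner_axis_axis inner_commute)

lemma S_indep: "independent S"
proof (rule pairwise_orthogonal_independent)
  show "pairwise real_inner_class.orthogonal S"
    using S_orth unfolding pairwise_def real_inner_class.orthogonal_def by blast
  have "w \<noteq> 0" using ab by (metis w_comp zero_index zero_neq_one)
  then show "0 \<notin> S" unfolding Sg_def by (auto simp: axis_eq_axis)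
qed

lemma L_basis: "lattice_basis L sl"
  unfolding lattice_basis_def using sl_distinct sl_set S_indep L_eq by simp

lemma gram_sl: "gram_det sl = K"
proof -
  have "gram_det sl = (\<Prod>x\<leftarrow>sl. x \<bullet> x)"
    by (rule gram_orth_list[OF sl_distinct]) (use S_orth sl_set in auto)
  also have "\<dots> = K" unfolding sl_def by (simp add: ww inner_axis_axis comp_def map_replicate_const)
  finally show ?thesis .
qed

lemma covol_L: "covol L = sqrt K"
  using covol_eq_basis[OF L_basis] gram_sl by simp

lemma dim_L: "dim (span L) = card I + 1"
  using lattice_basis_facts(5)[OF L_basis] Il distinct_card[OF Il(1)] unfolding sl_def by simp

lemma L_grass: "L \<in> grass_points (card I + 1)"
  unfolding grass_points_def
proof (intro CollectI conjI)
  show "L \<subseteq> int_points" unfolding Lam_def by blast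
  show "L = span L \<inter> int_points" unfolding span_L by (simp add: Lam_def)
  show "dim (span L) = card I + 1" by (rule dim_L)
qed

lemma height_L: "height L > 1"
proof -
  have "K > 1" using k by simp
  then have "sqrt K > 1" by simp
  then show ?thesis unfolding height_def covol_L using one_less_power by (simp add: one_less_power)
qed

end

lemma tensor_comp: "tensor_vec a b $ p = a $ fst p * b $ snd p"
  by (simp add: tensor_vec_def)

lemma tensor_inner: "tensor_vec a b \<bullet> tensor_vec c d = (a \<bullet> c) * (b \<bullet> d)"
proof -
  have "tensor_vec a b \<bullet> tensor_vec c d = (\<Sum>p\<in>UNIV \<times> UNIV. (a $ fst p * b $ snd p) * (c $ fst p * d $ snd p))"
    unfolding inner_vec_def tensor_comp UNIV_Times_UNIV by simp
  also have "\<dots> = (\<Sum>(i,j)\<in>UNIV \<times> UNIV. (a$i * c$i) * (b$j * d$j))"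
    by (rule sum.cong) (auto simp: ac_simps)
  also have "\<dots> = (\<Sum>i\<in>UNIV. \<Sum>j\<in>UNIV. (a$i * c$i) * (b$j * d$j))"
    by (rule sum.cartesian_product[symmetric])
  also have "\<dots> = (a \<bullet> c) * (b \<bullet> d)"
    unfolding inner_vec_def by (simp add: sum_product)
  finally show ?thesis .
qed

lemma tensor_norm: "norm (tensor_vec a b) = norm a * norm b"
  unfolding norm_eq_sqrt_inner tensor_inner by (simp add: real_sqrt_mult)

lemma tensor_add_left: "tensor_vec (x + y) b = tensor_vec x b + tensor_vec y b"
  by (simp add: Finite_Cartesian_Product.vec_eq_iff tensor_comp algebra_simps)
lemma tensor_add_right: "tensor_vec a (x + y) = tensor_vec a x + tensor_vec a y"
  by (simp add: Finite_Cartesian_Product.vec_eq_iff tensor_comp algebra_simps)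
lemma tensor_scale_left: "tensor_vec (c *\<^sub>R x) b = c *\<^sub>R tensor_vec x b"
  by (simp add: Finite_Cartesian_Product.vec_eq_iff tensor_comp algebra_simps)
lemma tensor_scale_right: "tensor_vec a (c *\<^sub>R x) = c *\<^sub>R tensor_vec a x"
  by (simp add: Finite_Cartesian_Product.vec_eq_iff tensor_comp algebra_simps)
lemma tensor_zero_left: "tensor_vec 0 b = 0"
  by (simp add: Finite_Cartesian_Product.vec_eq_iff tensor_comp)
lemma tensor_zero_right: "tensor_vec a 0 = 0"
  by (simp add: Finite_Cartesian_Product.vec_eq_iff tensor_comp)

lemma tensor_axis: "tensor_vec (axis i 1) (axis j 1) = axis (i, j) (1::real)"
  by (auto simp: Finite_Cartesian_Product.vec_eq_iff tensor_comp axis_comp)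

lemma tensor_span:
  fixes A B :: "(real^'n) set"
  assumes a: "a \<in> span A" and b: "b \<in> span B"
  shows "tensor_vec a b \<in> span {tensor_vec x y | x y. x \<in> A \<and> y \<in> B}"
proof -
  let ?G = "span {tensor_vec x y | x y. x \<in> A \<and> y \<in> B}"
  have gen: "tensor_vec x b \<in> ?G" if x: "x \<in> A" for x
  proof -
    have "span B \<subseteq> {b. tensor_vec x b \<in> ?G}"
    proof (rule span_minimal)
      show "B \<subseteq> {b. tensor_vec x b \<in> ?G}" using x by (auto intro: span_base)
      show "subspace {b. tensor_vec x b \<in> ?G}"
        by (auto simp: subspace_def tensor_add_right tensor_scale_right tensor_zero_right
            intro: span_add span_scale span_zero)
    qed
    then show ?thesis using b by blast
  qed
  have "span A \<subseteq> {a. tensor_vec a b \<in> ?G}"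
  proof (rule span_minimal)
    show "A \<subseteq> {a. tensor_vec a b \<in> ?G}" using gen by auto
    show "subspace {a. tensor_vec a b \<in> ?G}"
      by (auto simp: subspace_def tensor_add_left tensor_scale_left tensor_zero_left
          intro: span_add span_scale span_zero)
  qed
  then show ?thesis using a by blast
qed

context conc begin

lemma dual_S: "S \<subseteq> dual_lattice L"
  unfolding dual_lattice_def span_L using S_int span_superset[of S]
  by (auto simp: Lam_def intro: inner_int_points)

lemma axis_L: "i \<in> I \<Longrightarrow> axis i 1 \<in> L" using S_sub_L by (auto simp: Sg_def)
lemma w_L: "w \<in> L" using S_sub_L by (auto simp: Sg_def)

lemma K_int: "K \<in> \<int>"
proof -
  have "K = of_nat (1 + k^2)" by simp
  then show ?thesis by (metis Ints_of_nat)
qed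

lemma inner_w: "x \<bullet> w = x$a + real k * x$b"
  unfolding wv_def by (simp add: inner_add_right inner_axis)

lemma dual_int:
  assumes d: "d \<in> dual_lattice L"
  shows "(\<forall>j. K * d$j \<in> \<int>) \<and> d$i0 \<in> \<int>"
proof -
  have ds: "d \<in> span S" using d unfolding dual_lattice_def span_L by auto
  have dz: "\<forall>z\<in>L. d \<bullet> z \<in> \<int>" using d unfolding dual_lattice_def by auto
  note r = span_rep[OF ds]
  have di: "d$i \<in> \<int>" if "i \<in> I" for i
  proof -
    have "d \<bullet> axis i 1 \<in> \<int>" using dz axis_L[OF that] by blast
    then show ?thesis by (simp add: inner_axis)
  qed
  have "d \<bullet> w \<in> \<int>" using dz w_L by blast
  then have da: "K * d$a \<in> \<int>" using r by (simp add: inner_w algebra_simps power2_eq_square)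
  have "K * d$j \<in> \<int>" for j
  proof -
    consider "j \<in> I" | "j = a" | "j = b" | "j \<notin> I" "j \<noteq> a" "j \<noteq> b" by blast
    then show ?thesis
    proof cases
      case 1 then show ?thesis using di K_int by (simp add: Ints_mult)
    next
      case 2 then show ?thesis using da by simp
    next
      case 3
      have "K * d$b = real k * (K * d$a)" using r by simp
      then show ?thesis using 3 da by (metis Ints_mult Ints_of_nat)
    next
      case 4 then show ?thesis using r by simp
    qed
  qed
  then show ?thesis using di i0 by blast
qed

definition Pz :: "real^'n \<Rightarrow> real^'n" where
  "Pz z = z - (\<Sum>i\<in>I. z$i *\<^sub>R axis i 1) - ((z \<bullet> w) / K) *\<^sub>R w"

lemma Pz_comp: "Pz z $ j = z$j - (if j \<in> I then z$j else 0) - ((z \<bullet> w) / K) * w$j"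
  unfolding Pz_def by (simp only: vector_minus_component vector_scaleR_component sum_axis_comp) simp

lemma proj_L: "perp_proj (span L) z = Pz z"
  unfolding span_L
proof (rule perp_proj_eq)
  show "subspace (span S)" by simp
  have "z - Pz z = (\<Sum>i\<in>I. z$i *\<^sub>R axis i 1) + ((z \<bullet> w) / K) *\<^sub>R w" unfolding Pz_def by simp
  also have "\<dots> \<in> span S"
    by (intro span_add span_sum span_scale span_base) (auto simp: Sg_def)
  finally show "z - Pz z \<in> span S" .
  have "span S \<subseteq> {v. v \<bullet> Pz z = 0}"
  proof (rule span_minimal)
    show "subspace {v. v \<bullet> Pz z = 0}" by (auto simp: subspace_def inner_add_left)
    show "S \<subseteq> {v. v \<bullet> Pz z = 0}"
    proof
      fix s assume "s \<in> S"
      then consider "s = w" | i where "i \<in> I" "s = axis i 1" unfolding Sg_def by auto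
      then show "s \<in> {v. v \<bullet> Pz z = 0}"
      proof cases
        case 1
        have K0: "K \<noteq> 0" by (smt (verit) zero_le_power2)
        have aw: "(\<Sum>i\<in>I. z$i * (w \<bullet> axis i 1)) = 0" by (rule sum.neutral) (simp add: w_axis)
        have "w \<bullet> Pz z = w \<bullet> z - (\<Sum>i\<in>I. z$i * (w \<bullet> axis i 1)) - ((z \<bullet> w) / K) * (w \<bullet> w)"
          unfolding Pz_def by (simp add: inner_diff_right inner_sum_right)
        also have "\<dots> = 0" using K0 aw by (simp add: ww inner_commute)
        finally show ?thesis using 1 by simp
      next
        case 2
        have "axis i 1 \<bullet> Pz z = Pz z $ i" by (simp add: inner_axis' inner_commute)
        also have "\<dots> = 0" using 2 ab by (simp add: Pz_comp w_comp) (metis)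
        finally show ?thesis using 2 by simp
      qed
    qed
  qed
  then show "\<forall>v\<in>span S. v \<bullet> Pz z = 0" by blast
qed

lemma factor_int:
  assumes bf: "y \<in> factor_lattice L"
  shows "(\<forall>j. K * y$j \<in> \<int>) \<and> y$j0 \<in> \<int>"
proof -
  obtain z where z: "z \<in> int_points" "y = Pz z" using bf unfolding factor_lattice_def proj_L by auto
  have zi: "z$j \<in> \<int>" for j using z(1) by (simp add: int_points_def)
  have zw: "z \<bullet> w \<in> \<int>" using S_int z(1) by (intro inner_int_points) (auto simp: Sg_def)
  have K0: "K \<noteq> 0" by (smt (verit) zero_le_power2)
  have "K * y$j \<in> \<int>" for j
  proof -
    have e: "K * ((z \<bullet> w) / K * w$j) = (z \<bullet> w) * w$j" using K0 by simp
    have "K * y$j = K * z$j - K * (if j \<in> I then z$j else 0) - (z \<bullet> w) * w$j"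
      unfolding z(2) Pz_comp by (simp only: right_diff_distrib e)
    also have "\<dots> \<in> \<int>" using zi zw K_int by (auto simp: w_comp intro!: Ints_diff Ints_mult)
    finally show ?thesis .
  qed
  moreover have "y$j0 = z$j0" unfolding z(2) Pz_comp using j0 by (simp add: w_comp)
  ultimately show ?thesis using zi by simp
qed

lemma j0_factor: "axis j0 1 \<in> factor_lattice L"
proof -
  have "Pz (axis j0 1) = axis j0 1"
  proof -
    have "(\<Sum>i\<in>I. axis j0 (1::real) $ i *\<^sub>R axis i 1) = 0"
      by (rule sum.neutral) (use j0 in \<open>auto simp: axis_comp\<close>)
    moreover have "axis j0 1 \<bullet> w = 0" using j0 by (simp add: inner_w axis_comp)
    ultimately show ?thesis unfolding Pz_def by simp
  qed
  moreover have "axis j0 1 \<in> int_points" by (simp add: int_points_def axis_comp)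
  ultimately show ?thesis unfolding factor_lattice_def proj_L by (metis image_eqI)
qed

abbreviation "PL \<equiv> perp_proj (span L)"

lemma factor_span: "factor_lattice L \<subseteq> span (range (\<lambda>p. PL (axis p 1)))"
proof
  fix y assume "y \<in> factor_lattice L"
  then obtain z where z: "y = PL z" unfolding factor_lattice_def by auto
  have lin: "linear PL" by (rule perp_proj_linear) simp
  have "PL z = PL (\<Sum>p\<in>UNIV. z$p *\<^sub>R axis p 1)" using vec_axis_expansion[of z] by simp
  also have "\<dots> = (\<Sum>p\<in>UNIV. z$p *\<^sub>R PL (axis p 1))" using lin by (simp add: linear_sum linear_scale)
  also have "\<dots> \<in> span (range (\<lambda>p. PL (axis p 1)))"
    by (intro span_sum span_scale span_base) auto
  finally show "y \<in> span (range (\<lambda>p. PL (axis p 1)))" using z by simp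
qed

lemma factor_gen: "PL (axis p 1) \<in> factor_lattice L"
  unfolding factor_lattice_def by (rule imageI) (simp add: int_points_def axis_comp)

lemma factor_gen_norm: "norm (PL (axis p 1)) \<le> 1"
  using perp_proj_norm[of "span L" "axis p 1"] by simp

end

context conc begin

abbreviation "Gen \<equiv> {tensor_vec x y | x y. x \<in> dual_lattice L \<and> y \<in> factor_lattice L}"

lemma T_def': "tangent_lattice L = Z.span Gen"
  unfolding tangent_lattice_def int_span_Z ..

lemma T_sub: "Z.subspace (tangent_lattice L)"
  unfolding T_def' by simp

lemma T_den: "\<forall>t\<in>tangent_lattice L. \<forall>p. of_int (int ((1 + k^2)^2)) * t$p \<in> \<int>"
proof -
  have DK: "real_of_int (int ((1 + k^2)^2)) = K * K" by (simp add: power2_eq_square algebra_simps)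
  have "Z.span Gen \<subseteq> {t. \<forall>p. K * K * t$p \<in> \<int>}"
  proof (rule Z.span_minimal)
    show "Gen \<subseteq> {t. \<forall>p. K * K * t$p \<in> \<int>}"
    proof
      fix t assume "t \<in> Gen"
      then obtain x y where t: "t = tensor_vec x y" "x \<in> dual_lattice L" "y \<in> factor_lattice L" by blast
      have "K * K * t$p \<in> \<int>" for p
      proof -
        have "K * K * t$p = (K * x$fst p) * (K * y$snd p)" unfolding t(1) tensor_comp by simp
        also have "\<dots> \<in> \<int>" by (rule Ints_mult) (use dual_int[OF t(2)] factor_int[OF t(3)] in auto)
        finally show ?thesis .
      qed
      then show "t \<in> {t. \<forall>p. K * K * t$p \<in> \<int>}" by simp
    qed
    show "Z.subspace {t::real^('n\<times>'n). \<forall>p. K * K * t$p \<in> \<int>}"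
      unfolding Z_subspace_iff
    proof (intro conjI ballI allI)
      show "(0::real^('n\<times>'n)) \<in> {t. \<forall>p. K * K * t$p \<in> \<int>}" by simp
    next
      fix x y :: "real^('n\<times>'n)" assume "x \<in> {t. \<forall>p. K * K * t$p \<in> \<int>}" "y \<in> {t. \<forall>p. K * K * t$p \<in> \<int>}"
      then show "x + y \<in> {t. \<forall>p. K * K * t$p \<in> \<int>}" by (simp add: distrib_left Ints_add)
    next
      fix c :: int and x :: "real^('n\<times>'n)" assume "x \<in> {t. \<forall>p. K * K * t$p \<in> \<int>}"
      then have "\<forall>p. of_int c * (K * K * x$p) \<in> \<int>" by (auto intro: Ints_mult)
      then show "of_int c *\<^sub>R x \<in> {t. \<forall>p. K * K * t$p \<in> \<int>}" by (simp add: ac_simps)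
    qed
  qed
  then show ?thesis unfolding T_def' DK by blast
qed

abbreviation "fv \<equiv> tensor_vec (axis i0 1) (axis j0 1 :: real^'n)"

lemma f_T: "fv \<in> tangent_lattice L"
proof -
  have "axis i0 1 \<in> dual_lattice L" using dual_S i0 by (auto simp: Sg_def)
  then have "fv \<in> Gen" using j0_factor by blast
  then show ?thesis unfolding T_def' by (rule Z.span_base)
qed

lemma ff: "fv \<bullet> fv = 1"
  by (simp add: tensor_inner inner_axis_axis)

lemma T_intf: "\<forall>t\<in>tangent_lattice L. t \<bullet> fv \<in> \<int>"
proof -
  have "Z.span Gen \<subseteq> {t. t \<bullet> fv \<in> \<int>}"
  proof (rule Z.span_minimal)
    show "Gen \<subseteq> {t. t \<bullet> fv \<in> \<int>}"
    proof
      fix t assume "t \<in> Gen"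
      then obtain x y where t: "t = tensor_vec x y" "x \<in> dual_lattice L" "y \<in> factor_lattice L" by blast
      have "t \<bullet> fv = x$i0 * y$j0" unfolding t(1) tensor_inner by (simp add: inner_axis)
      also have "\<dots> \<in> \<int>" using dual_int[OF t(2)] factor_int[OF t(3)] by (intro Ints_mult) auto
      finally show "t \<in> {t. t \<bullet> fv \<in> \<int>}" by simp
    qed
    show "Z.subspace {t::real^('n\<times>'n). t \<bullet> fv \<in> \<int>}"
      unfolding Z_subspace_iff
    proof (intro conjI ballI allI)
      show "(0::real^('n\<times>'n)) \<in> {t. t \<bullet> fv \<in> \<int>}" by simp
    next
      fix x y :: "real^('n\<times>'n)" assume "x \<in> {t. t \<bullet> fv \<in> \<int>}" "y \<in> {t. t \<bullet> fv \<in> \<int>}"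
      then show "x + y \<in> {t. t \<bullet> fv \<in> \<int>}" by (simp add: inner_add_left Ints_add)
    next
      fix c :: int and x :: "real^('n\<times>'n)" assume "x \<in> {t. t \<bullet> fv \<in> \<int>}"
      then have "of_int c * (x \<bullet> fv) \<in> \<int>" by (intro Ints_mult) auto
      then show "of_int c *\<^sub>R x \<in> {t. t \<bullet> fv \<in> \<int>}" by simp
    qed
  qed
  then show ?thesis unfolding T_def' by blast
qed

abbreviation "B0 \<equiv> {tensor_vec x y | x y. x \<in> S \<and> y \<in> range (\<lambda>p. PL (axis p 1))}"

lemma B0_T: "B0 \<subseteq> tangent_lattice L"
proof
  fix t assume "t \<in> B0"
  then obtain x p where t: "t = tensor_vec x (PL (axis p 1))" "x \<in> S" by blast
  have "t \<in> Gen" using t dual_S factor_gen by blast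
  then show "t \<in> tangent_lattice L" unfolding T_def' by (rule Z.span_base)
qed

lemma T_B0: "tangent_lattice L \<subseteq> span B0"
proof -
  have "Gen \<subseteq> span B0"
  proof
    fix t assume "t \<in> Gen"
    then obtain x y where t: "t = tensor_vec x y" "x \<in> dual_lattice L" "y \<in> factor_lattice L" by blast
    have xs: "x \<in> span S" using t(2) unfolding dual_lattice_def span_L by auto
    have ys: "y \<in> span (range (\<lambda>p. PL (axis p 1)))" using t(3) factor_span by blast
    show "t \<in> span B0" using tensor_span[OF xs ys] t(1) by simp
  qed
  then have "span Gen \<subseteq> span B0" by (simp add: span_minimal)
  then show ?thesis unfolding T_def' using Z_span_subset_span[of Gen] span_superset[of Gen] by blast
qed

lemma B0_norm: "\<forall>x\<in>B0. norm x \<le> K"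
proof
  fix t assume "t \<in> B0"
  then obtain x p where t: "t = tensor_vec x (PL (axis p 1))" "x \<in> S" by blast
  have K1: "1 \<le> K" by simp
  have nx: "norm x \<le> K"
  proof -
    consider "x = w" | i where "x = axis i 1" using t(2) unfolding Sg_def by auto
    then show ?thesis
    proof cases
      case 1
      have "norm w = sqrt K" unfolding norm_eq_sqrt_inner ww ..
      also have "\<dots> \<le> K"
      proof -
        have s1: "1 \<le> sqrt K" using K1 by simp
        have "sqrt K = sqrt K * 1" by simp
        also have "\<dots> \<le> sqrt K * sqrt K" using s1 by (intro mult_left_mono) auto
        also have "\<dots> = K" using K1 by simp
        finally show ?thesis .
      qed
      finally show ?thesis using 1 by simp
    next
      case 2 then show ?thesis using K1 by simp
    qed
  qed
  have "norm t = norm x * norm (PL (axis p 1))" unfolding t(1) by (rule tensor_norm)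
  also have "\<dots> \<le> norm x * 1" by (intro mult_left_mono factor_gen_norm) simp
  finally show "norm t \<le> K" using nx by simp
qed

lemma min_slope_T: "min_slope (tangent_lattice L) \<le> 0"
proof -
  have h: "(1::int) + (int k)^2 \<noteq> 0" by (smt (verit) zero_le_power2)
  show ?thesis
    by (rule min_slope_le0[OF T_sub f_T ff T_intf _ T_den B0_T T_B0 B0_norm]) (use h in simp_all)
qed

lemma freeness_L: "freeness L = 0"
proof -
  have "real (dim (span L) * (CARD('n) - dim (span L))) * min_slope (tangent_lattice L) \<le> 0"
    using min_slope_T by (simp add: mult_nonneg_nonpos)
  then show ?thesis unfolding freeness_def Let_def by simp
qed

end

theorem theorem1p1:
  fixes m :: nat
  assumes "1 < m" and "m < CARD('n) - 1"
  shows "infinite {\<Lambda> \<in> (grass_points m :: (real^'n) set set). height \<Lambda> > 1 \<and> freeness \<Lambda> = 0}"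
proof -
  let ?N = "CARD('n)"
  obtain h :: "nat \<Rightarrow> 'n" where h: "bij_betw h {0..<?N} UNIV"
    using ex_bij_betw_nat_finite[of "UNIV :: 'n set"] by auto
  have hinj: "inj_on h {0..<?N}" using h by (simp add: bij_betw_def)
  have mN: "m + 1 < ?N" using assms by linarith
  define I where "I = h ` {1..<m}"
  define a where "a = h 0"
  define b where "b = h m"
  define i0 where "i0 = h 1"
  define j0 where "j0 = h (m + 1)"
  have heq: "h x = h y \<longleftrightarrow> x = y" if "x < ?N" "y < ?N" for x y
    using hinj that by (auto simp: inj_on_def)
  have cardI: "card I + 1 = m"
  proof -
    have "{1..<m} \<subseteq> {0..<?N}" using mN by auto
    then have "inj_on h {1..<m}" using hinj inj_on_subset by blast
    then have "card I = m - 1" unfolding I_def by (simp add: card_image)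
    then show ?thesis using assms by simp
  qed
  have cc: "conc I a b i0 j0 k" if "k \<ge> 1" for k
  proof
    show "a \<noteq> b" unfolding a_def b_def using heq[of 0 m] mN assms by simp
    show "a \<notin> I" unfolding a_def I_def using heq mN by auto
    show "b \<notin> I" unfolding b_def I_def using heq mN by auto
    show "i0 \<in> I" unfolding i0_def I_def using assms by auto
    show "j0 \<notin> I" unfolding j0_def I_def using heq mN by auto
    show "j0 \<noteq> a" unfolding j0_def a_def using heq[of "m+1" 0] mN by simp
    show "j0 \<noteq> b" unfolding j0_def b_def using heq[of "m+1" m] mN by simp
    show "k \<ge> 1" by (rule that)
  qed
  define F where "F k = Lam I a b k" for k
  have inF: "F k \<in> {\<Lambda> \<in> (grass_points m :: (real^'n) set set). height \<Lambda> > 1 \<and> freeness \<Lambda> = 0}"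
    if "k \<in> {1..}" for k
    using conc.L_grass[OF cc] conc.height_L[OF cc] conc.freeness_L[OF cc] that cardI
    unfolding F_def by auto
  have injF: "inj_on F {1..}"
  proof (rule inj_onI)
    fix k k' :: nat assume k: "k \<in> {1..}" and k': "k' \<in> {1..}" and eq: "F k = F k'"
    have "wv a b k \<in> F k'" using conc.w_L[OF cc] k eq unfolding F_def by auto
    then have "wv a b k \<in> span (Sg I a b k')" unfolding F_def Lam_def by auto
    then have "(wv a b k) $ b = real k' * (wv a b k) $ a"
      using conc.span_rep[OF cc] k' by auto
    moreover have "(wv a b k) $ b = real k" "(wv a b k) $ a = 1"
      using conc.w_comp[OF cc] k conc.ab[OF cc] by auto
    ultimately show "k = k'" by simp
  qed
  have "infinite (F ` {1..})"
    using injF finite_imageD infinite_Ici by blast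
  moreover have "F ` {1..} \<subseteq> {\<Lambda> \<in> (grass_points m :: (real^'n) set set). height \<Lambda> > 1 \<and> freeness \<Lambda> = 0}"
    using inF by blast
  ultimately show ?thesis using infinite_super by blast
qed

end
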